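(* Let $m,n\ge1$ and $A,B\in\mathbb{R}_+^{m\times n}$. Then: (1) There exists $\mathbf{y}\in\mathbb{R}^n_+\setminus\{\mathbf{0}\}$ with $\hat\rho(A,B)=r(A,B,\mathbf{y})$, i.e. a weakly optimal vector exists. (2) There exists $\mathbf{y}\in\mathbb{R}^n_+\setminus\{\mathbf{0}\}$ with $\rho(A,B)=r(A,B,\mathbf{y})$ for which there is a sequence $\mathbf{y}_k>\mathbf{0}$, $k\in\mathbb{N}$, with $\lim_{k\to\infty}\mathbf{y}_k=\mathbf{y}$ and $\lim_{k\to\infty}r(A,B,\mathbf{y}_k)=\rho(A,B)$, i.e. an optimal vector exists.
   Context: $[m]=\{1,\dots,m\}$. For $A,B\in\mathbb{R}_+^{m\times n}$ (entrywise nonnegative real matrices) and $\mathbf{x}\in\mathbb{R}^n_+\setminus\{\mathbf{0}\}$, set $r(A,B,\mathbf{x})=\max_{i\in[m]}\frac{(A\mathbf{x})_i}{(B\mathbf{x})_i}\in[0,\infty]$ with the conventions $\frac00=0$ and $\frac c0=\infty$ for $c>0$; equivalently $r(A,B,\mathbf{x})=\inf\{t\ge 0: A\mathbf{x}\le tB\mathbf{x}\}$ (with $\inf\emptyset=\infty$). The Collatz–Wielandt quotient is $\rho(A,B)=\inf\{r(A,B,\mathbf{x}):\mathbf{x}>\mathbf{0}\}$ (infimum over vectors with all coordinates positive) and the weak Collatz–Wielandt quotient is $\hat\rho(A,B)=\inf\{r(A,B,\mathbf{x}):\mathbf{x}\in\mathbb{R}^n_+\setminus\{\mathbf{0}\}\}$.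 *)

theory Defs
  imports "HOL-Analysis.Analysis" "HOL-Library.Extended_Real"
begin

text \<open>Quotient in [0,\<infinity>] with conventions 0/0 = 0 and c/0 = \<infinity> for c > 0
  (arguments are nonnegative in all uses).\<close>
definition cw_quot :: "real \<Rightarrow> real \<Rightarrow> ereal" where
  "cw_quot a b = (if a = 0 then 0 else if b = 0 then \<infinity> else ereal (a / b))"

definition nonneg_mat :: "real ^ 'n ^ 'm \<Rightarrow> bool" where
  "nonneg_mat A \<longleftrightarrow> (\<forall>i j. 0 \<le> A $ i $ j)"

definition nonneg_vec :: "real ^ 'n \<Rightarrow> bool" where
  "nonneg_vec x \<longleftrightarrow> (\<forall>j. 0 \<le> x $ j)"

definition pos_vec :: "real ^ 'n \<Rightarrow> bool" where
  "pos_vec x \<longleftrightarrow> (\<forall>j. 0 < x $ j)"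

definition cw_r :: "real ^ 'n ^ 'm::finite \<Rightarrow> real ^ 'n ^ 'm \<Rightarrow> real ^ 'n \<Rightarrow> ereal" where
  "cw_r A B x = Max (range (\<lambda>i. cw_quot ((A *v x) $ i) ((B *v x) $ i)))"

definition cw_rho :: "real ^ 'n ^ 'm::finite \<Rightarrow> real ^ 'n ^ 'm \<Rightarrow> ereal" where
  "cw_rho A B = Inf {cw_r A B x | x. pos_vec x}"

definition cw_rho_hat :: "real ^ 'n ^ 'm::finite \<Rightarrow> real ^ 'n ^ 'm \<Rightarrow> ereal" where
  "cw_rho_hat A B = Inf {cw_r A B x | x. nonneg_vec x \<and> x \<noteq> 0}"

end

theory Submission
  imports Defs
begin

lemma mv_nth: "(A *v x) $ i = (\<Sum>j\<in>UNIV. A$i$j * x$j)"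
  by (simp add: matrix_vector_mult_def)

lemma mv_nonneg: "nonneg_mat A \<Longrightarrow> nonneg_vec x \<Longrightarrow> 0 \<le> (A *v x) $ i"
  unfolding mv_nth nonneg_mat_def nonneg_vec_def by (intro sum_nonneg) auto

lemma quot_le: "0 \<le> a \<Longrightarrow> 0 \<le> b \<Longrightarrow> 0 \<le> t \<Longrightarrow> cw_quot a b \<le> ereal t \<longleftrightarrow> a \<le> t * b"
  unfolding cw_quot_def by (auto simp: pos_divide_le_eq mult.commute)

lemma quot_nonneg: "0 \<le> a \<Longrightarrow> 0 \<le> b \<Longrightarrow> 0 \<le> cw_quot a b"
  unfolding cw_quot_def by auto

lemma r_ge: "cw_quot ((A *v x) $ i) ((B *v x) $ i) \<le> cw_r A B x"
  unfolding cw_r_def by (rule Max_ge) auto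

lemma r_le: assumes "nonneg_mat A" "nonneg_mat B" "nonneg_vec x" "0 \<le> t"
  shows "cw_r A B x \<le> ereal t \<longleftrightarrow> (\<forall>i. (A *v x)$i \<le> t * (B *v x)$i)"
proof -
  have "cw_r A B x \<le> ereal t \<longleftrightarrow> (\<forall>i. cw_quot ((A *v x) $ i) ((B *v x) $ i) \<le> ereal t)"
    unfolding cw_r_def by (subst Max_le_iff) auto
  also have "\<dots> \<longleftrightarrow> (\<forall>i. (A *v x)$i \<le> t * (B *v x)$i)"
    using quot_le[OF mv_nonneg[OF assms(1,3)] mv_nonneg[OF assms(2,3)] assms(4)] by auto
  finally show ?thesis .
qed

lemma r_nonneg: assumes "nonneg_mat A" "nonneg_mat B" "nonneg_vec x"
  shows "0 \<le> cw_r A B x"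
  using r_ge[of A x _ B] quot_nonneg[OF mv_nonneg[OF assms(1,3)] mv_nonneg[OF assms(2,3)]]
  by (meson order_trans)

lemma compact_lim:
  fixes A B :: "real ^ 'n::finite ^ 'm::finite" and x :: "nat \<Rightarrow> real ^ 'n"
  assumes x: "\<And>k. nonneg_vec (x k)" "\<And>k. x k \<noteq> 0"
    and ineq: "\<And>k i. i \<in> I \<Longrightarrow> (A *v x k)$i \<le> t k * (B *v x k)$i"
    and t: "t \<longlonglongrightarrow> t0"
    and J: "\<And>k j. j \<in> J \<Longrightarrow> x k $ j = 0"
  shows "\<exists>v. nonneg_vec v \<and> v \<noteq> 0 \<and> (\<forall>i\<in>I. (A *v v)$i \<le> t0 * (B *v v)$i) \<and> (\<forall>j\<in>J. v$j = 0)"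
proof -
  define s where "s k = (\<Sum>j\<in>UNIV. x k $ j)" for k
  have spos: "s k > 0" for k
  proof -
    obtain j where "x k $ j \<noteq> 0" using x(2)[of k] by (metis vec_eq_iff zero_index)
    hence "x k $ j > 0" using x(1)[of k] unfolding nonneg_vec_def by (metis less_eq_real_def)
    moreover have "x k $ j \<le> s k" unfolding s_def
      by (rule member_le_sum) (use x(1)[of k] in \<open>auto simp: nonneg_vec_def\<close>)
    ultimately show ?thesis by simp
  qed
  define z where "z k = (1 / s k) *\<^sub>R x k" for k
  have zc: "z k $ j = x k $ j / s k" for k j by (simp add: z_def)
  have znn: "0 \<le> z k $ j" for k j using x(1)[of k] spos[of k] by (simp add: zc nonneg_vec_def)
  have zsum: "(\<Sum>j\<in>UNIV. z k $ j) = 1" for k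
    using spos[of k] by (simp add: zc s_def flip: sum_divide_distrib)
  have "bounded (range z)"
  proof -
    have "norm (z k) \<le> 1" for k
      using norm_le_l1_cart[of "z k"] znn zsum by simp
    thus ?thesis by (auto simp: bounded_iff)
  qed
  then obtain l r where r: "strict_mono r" and lim: "(z \<circ> r) \<longlonglongrightarrow> l"
    using bounded_imp_convergent_subsequence by blast
  have limc: "(\<lambda>k. z (r k) $ j) \<longlonglongrightarrow> l $ j" for j
    using tendsto_vec_nth[OF lim] by (simp add: o_def)
  have lnn: "0 \<le> l $ j" for j
    by (rule LIMSEQ_le_const[OF limc]) (simp add: znn)
  have "(\<lambda>k. \<Sum>j\<in>UNIV. z (r k) $ j) \<longlonglongrightarrow> (\<Sum>j\<in>UNIV. l $ j)"
    by (intro tendsto_sum limc)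
  hence lsum: "(\<Sum>j\<in>UNIV. l $ j) = 1" using zsum by (simp add: LIMSEQ_const_iff)
  have l0: "l \<noteq> 0" using lsum by auto
  have tr: "(\<lambda>k. t (r k)) \<longlonglongrightarrow> t0" using t r by (rule LIMSEQ_subseq_LIMSEQ[unfolded o_def])
  have "(A *v l)$i \<le> t0 * (B *v l)$i" if "i \<in> I" for i
  proof -
    have "(\<lambda>k. t (r k) * (B *v z (r k))$i - (A *v z (r k))$i) \<longlonglongrightarrow> t0 * (B *v l)$i - (A *v l)$i"
      (is "?L \<longlonglongrightarrow> _") unfolding mv_nth by (intro tendsto_intros tr limc)
    moreover have "0 \<le> t (r k) * (B *v z (r k))$i - (A *v z (r k))$i" for k
    proof -
      have "(A *v z (r k))$i = (A *v x (r k))$i / s (r k)"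
        "(B *v z (r k))$i = (B *v x (r k))$i / s (r k)"
        by (simp_all add: mv_nth zc sum_divide_distrib)
      thus ?thesis using ineq[OF that, of "r k"] spos[of "r k"]
        by (simp add: divide_right_mono pos_le_divide_eq)
    qed
    ultimately have "0 \<le> t0 * (B *v l)$i - (A *v l)$i" by (meson LIMSEQ_le_const)
    thus ?thesis by simp
  qed
  moreover have "l $ j = 0" if "j \<in> J" for j
    using LIMSEQ_unique[OF limc[of j]] J[OF that] by (simp add: zc)
  ultimately show ?thesis using l0 lnn by (auto simp: nonneg_vec_def)
qed

lemma mv_lin: "(A *v (w + c *\<^sub>R y))$i = (A *v w)$i + c * (A *v y)$i"
  by (simp add: mv_nth sum.distrib algebra_simps sum_distrib_left)

lemma zero_pattern:
  fixes A :: "real ^ 'n::finite ^ 'm::finite" and w y :: "real ^ 'n"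
  assumes "nonneg_mat A" "nonneg_vec w" "(A *v w)$i = 0"
  shows "(A *v (\<chi> j. if w$j = 0 then y$j else 0))$i = (A *v y)$i"
proof -
  have z: "A$i$j * w$j = 0" for j
    using assms unfolding mv_nth nonneg_mat_def nonneg_vec_def
    by (subst (asm) sum_nonneg_eq_0_iff) auto
  show ?thesis unfolding mv_nth
    by (intro sum.cong refl) (use z in \<open>auto\<close>)
qed

lemma tk_lim: "(\<lambda>k. p + inverse (real (Suc k))) \<longlonglongrightarrow> (p::real)"
  using tendsto_add[OF tendsto_const LIMSEQ_inverse_real_of_nat, of p] by simp

lemma part1:
  fixes A B :: "real ^ 'n::finite ^ 'm::finite"
  assumes AB: "nonneg_mat A" "nonneg_mat B"
  shows "\<exists>y. nonneg_vec y \<and> y \<noteq> 0 \<and> cw_rho_hat A B = cw_r A B y"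
proof -
  define one :: "real ^ 'n" where "one = (\<chi> j. 1)"
  have one: "nonneg_vec one" "one \<noteq> 0" "pos_vec one"
    by (auto simp: one_def nonneg_vec_def pos_vec_def vec_eq_iff)
  have low: "cw_rho_hat A B \<le> cw_r A B x" if "nonneg_vec x" "x \<noteq> 0" for x
    unfolding cw_rho_hat_def by (rule Inf_lower) (use that in auto)
  have ge0: "0 \<le> cw_rho_hat A B"
    unfolding cw_rho_hat_def by (rule Inf_greatest) (auto intro: r_nonneg AB)
  show ?thesis
  proof (cases "cw_rho_hat A B")
    case PInf
    thus ?thesis using low[OF one(1,2)] one by (intro exI[of _ one]) auto
  next
    case MInf thus ?thesis using ge0 by simp
  next
    case (real p)
    hence p0: "0 \<le> p" using ge0 by simp
    define t where "t k = p + inverse (real (Suc k))" for k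
    have t0: "0 \<le> t k" for k using p0 by (simp add: t_def add_nonneg_nonneg)
    have "\<exists>x. nonneg_vec x \<and> x \<noteq> 0 \<and> cw_r A B x < ereal (t k)" for k
    proof -
      have "cw_rho_hat A B < ereal (t k)" using real by (simp add: t_def)
      thus ?thesis unfolding cw_rho_hat_def Inf_less_iff by auto
    qed
    then obtain x where x: "\<And>k. nonneg_vec (x k)" "\<And>k. x k \<noteq> 0"
      "\<And>k. cw_r A B (x k) < ereal (t k)" by metis
    have ineq: "(A *v x k)$i \<le> t k * (B *v x k)$i" for k i
      using r_le[OF AB x(1) t0, of k k] x(3)[of k] by auto
    have tl: "t \<longlonglongrightarrow> p" unfolding t_def by (rule tk_lim)
    obtain v where v: "nonneg_vec v" "v \<noteq> 0" "\<forall>i\<in>UNIV. (A *v v)$i \<le> p * (B *v v)$i"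
      using compact_lim[OF x(1,2) ineq tl, where J="{}" and I=UNIV] by auto
    have "cw_r A B v \<le> ereal p" using r_le[OF AB v(1) p0] v(3) by auto
    hence "cw_r A B v = cw_rho_hat A B" using low[OF v(1,2)] real by auto
    thus ?thesis using v by auto
  qed
qed

lemma part2:
  fixes A B :: "real ^ 'n::finite ^ 'm::finite"
  assumes AB: "nonneg_mat A" "nonneg_mat B"
  shows "\<exists>y. nonneg_vec y \<and> y \<noteq> 0 \<and> cw_rho A B = cw_r A B y \<and>
            (\<exists>ys :: nat \<Rightarrow> real ^ 'n. (\<forall>k. pos_vec (ys k)) \<and> ys \<longlonglongrightarrow> y \<and>
                 (\<lambda>k. cw_r A B (ys k)) \<longlonglongrightarrow> cw_rho A B)"
proof -
  define one :: "real ^ 'n" where "one = (\<chi> j. 1)"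
  have one: "nonneg_vec one" "one \<noteq> 0" "pos_vec one"
    by (auto simp: one_def nonneg_vec_def pos_vec_def vec_eq_iff)
  have low: "cw_rho A B \<le> cw_r A B x" if "pos_vec x" for x
    unfolding cw_rho_def by (rule Inf_lower) (use that in auto)
  have pn: "nonneg_vec x" if "pos_vec x" for x
    using that by (auto simp: pos_vec_def nonneg_vec_def less_imp_le)
  have ge0: "0 \<le> cw_rho A B"
    unfolding cw_rho_def by (rule Inf_greatest) (auto intro: r_nonneg AB pn)
  show ?thesis
  proof (cases "cw_rho A B")
    case PInf
    hence "cw_rho A B = cw_r A B one" using low[OF one(3)] by auto
    thus ?thesis using one
      by (intro exI[of _ one] conjI exI[of _ "\<lambda>k. one"]) auto
  next
    case MInf thus ?thesis using ge0 by simp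
  next
    case (real p)
    hence p0: "0 \<le> p" using ge0 by simp
    define t where "t k = p + inverse (real (Suc k))" for k
    have t0: "0 \<le> t k" for k using p0 by (simp add: t_def add_nonneg_nonneg)
    have pt: "p \<le> t k" for k by (simp add: t_def)
    have tl: "t \<longlonglongrightarrow> p" unfolding t_def by (rule tk_lim)
    have "\<exists>x. pos_vec x \<and> cw_r A B x < ereal (t k)" for k
    proof -
      have "cw_rho A B < ereal (t k)" using real by (simp add: t_def)
      thus ?thesis unfolding cw_rho_def Inf_less_iff by auto
    qed
    then obtain y where y: "\<And>k. pos_vec (y k)" "\<And>k. cw_r A B (y k) < ereal (t k)" by metis
    have y0: "y k \<noteq> 0" for k using y(1)[of k] by (auto simp: pos_vec_def)
    have ineq: "(A *v y k)$i \<le> t k * (B *v y k)$i" for k i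
      using r_le[OF AB pn[OF y(1)] t0, of k k] y(2)[of k] by auto
    define P where "P w \<longleftrightarrow> nonneg_vec w \<and> w \<noteq> 0 \<and> (\<forall>i. (A *v w)$i \<le> p * (B *v w)$i)"
      for w :: "real ^ 'n"
    define f where "f w = card {j. w $ j \<noteq> 0}" for w :: "real ^ 'n"
    obtain w0 where "P w0"
      using compact_lim[OF pn[OF y(1)] y0 ineq tl, where J="{}" and I=UNIV] by (auto simp: P_def)
    have fb: "f w \<le> CARD('n)" for w unfolding f_def by (rule card_mono) auto
    have "\<exists>x. P x \<and> (\<forall>y. P y \<longrightarrow> f y \<le> f x)"
      using ex_has_greatest_nat[of P w0 f "Suc CARD('n)"] \<open>P w0\<close> fb
      by (simp add: le_imp_less_Suc)
    then obtain w where Pw: "P w" and wmax: "\<And>w'. P w' \<Longrightarrow> f w' \<le> f w" by blast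
    have wnn: "nonneg_vec w" and wne: "w \<noteq> 0" and wC: "\<And>i. (A *v w)$i \<le> p * (B *v w)$i"
      using Pw by (auto simp: P_def)
    have rw: "cw_r A B w \<le> ereal p" using r_le[OF AB wnn p0] wC by auto
    have "cw_r A B w = ereal p"
    proof (rule ccontr)
      assume "cw_r A B w \<noteq> ereal p"
      with rw have lt: "cw_r A B w < ereal p" by simp
      have "0 < p" using lt r_nonneg[OF AB wnn] by (metis ereal_less(2) le_less_trans)
      define I where "I = {i. (A *v w)$i = 0 \<and> (B *v w)$i = 0}"
      have strict: "(A *v w)$i < p * (B *v w)$i" if "i \<notin> I" for i
      proof -
        have a0: "0 \<le> (A *v w)$i" and b0: "0 \<le> (B *v w)$i" using mv_nonneg AB wnn by auto
        have q: "cw_quot ((A *v w)$i) ((B *v w)$i) < ereal p"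
          using r_ge[of A w i B] lt by (rule le_less_trans)
        show ?thesis
        proof (cases "(A *v w)$i = 0")
          case True
          hence "(B *v w)$i > 0" using that b0 by (auto simp: I_def)
          thus ?thesis using True \<open>0 < p\<close> by simp
        next
          case False
          hence "(B *v w)$i \<noteq> 0" using q by (auto simp: cw_quot_def)
          hence "(B *v w)$i > 0" using b0 by simp
          moreover have "(A *v w)$i / (B *v w)$i < p" using q False \<open>(B *v w)$i \<noteq> 0\<close>
            by (auto simp: cw_quot_def)
          ultimately show ?thesis by (simp add: divide_less_eq mult.commute)
        qed
      qed
      obtain j0 where j0: "w $ j0 = 0"
      proof (rule ccontr)
        assume "\<not> thesis"
        hence "pos_vec w" using wnn that by (auto simp: pos_vec_def nonneg_vec_def less_le)
        thus False using low lt real by fastforce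
      qed
      define x where "x k = (\<chi> j. if w$j = 0 then y k $ j else 0)" for k
      have xnn: "nonneg_vec (x k)" for k using pn[OF y(1)] by (auto simp: x_def nonneg_vec_def)
      have x0: "x k \<noteq> 0" for k
      proof
        assume "x k = 0"
        hence "x k $ j0 = 0" by simp
        thus False using j0 y(1)[of k] by (auto simp: x_def pos_vec_def dest: spec[of _ j0])
      qed
      have xineq: "(A *v x k)$i \<le> t k * (B *v x k)$i" if "i \<in> I" for k i
        using ineq[of k i] zero_pattern[OF AB(1) wnn, of i "y k"] zero_pattern[OF AB(2) wnn, of i "y k"]
          that by (simp add: I_def x_def)
      have xJ: "x k $ j = 0" if "j \<in> {j. w $ j \<noteq> 0}" for k j using that by (simp add: x_def)
      obtain v where vnn: "nonneg_vec v" and v0: "v \<noteq> 0" and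
        vI: "\<forall>i\<in>I. (A *v v)$i \<le> p * (B *v v)$i" and vJ: "\<forall>j\<in>{j. w $ j \<noteq> 0}. v$j = 0"
        using compact_lim[OF xnn x0 xineq tl xJ] by blast
      have "\<forall>\<^sub>F e in at_right 0. \<forall>i. i \<notin> I \<longrightarrow> e * (A *v v)$i < p * (B *v w)$i - (A *v w)$i"
      proof (rule eventually_all_finite)
        fix i
        show "\<forall>\<^sub>F e in at_right 0. i \<notin> I \<longrightarrow> e * (A *v v)$i < p * (B *v w)$i - (A *v w)$i"
        proof (cases "i \<in> I")
          case False
          have "((\<lambda>e. e * (A *v v)$i) \<longlongrightarrow> 0 * (A *v v)$i) (at_right (0::real))"
            by (intro tendsto_intros)
          hence "\<forall>\<^sub>F e in at_right 0. e * (A *v v)$i < p * (B *v w)$i - (A *v w)$i"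
            using strict[OF False] by (intro order_tendstoD) auto
          thus ?thesis by (rule eventually_mono) simp
        qed simp
      qed
      then obtain b where b: "b > 0" "\<And>e. e > 0 \<Longrightarrow> e < b \<Longrightarrow>
          \<forall>i. i \<notin> I \<longrightarrow> e * (A *v v)$i < p * (B *v w)$i - (A *v w)$i"
        unfolding eventually_at_right_field by auto
      define e where "e = b / 2"
      have e: "e > 0" "\<forall>i. i \<notin> I \<longrightarrow> e * (A *v v)$i < p * (B *v w)$i - (A *v w)$i"
        using b(1) b(2)[of e] by (auto simp: e_def)
      define w' where "w' = w + e *\<^sub>R v"
      have "P w'"
      proof -
        have nn: "nonneg_vec w'" using wnn vnn e(1) by (auto simp: w'_def nonneg_vec_def)
        obtain j1 where "w $ j1 \<noteq> 0" using wne by (metis vec_eq_iff zero_index)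
        hence "w' \<noteq> 0" using wnn vnn e(1)
          apply (auto simp: w'_def nonneg_vec_def vec_eq_iff dest!: spec[of _ j1])
          by (metis add_nonneg_eq_0_iff less_le mult_nonneg_nonneg)
        moreover have "(A *v w')$i \<le> p * (B *v w')$i" for i
        proof (cases "i \<in> I")
          case True
          thus ?thesis using vI e(1) by (simp add: w'_def mv_lin I_def mult.left_commute)
        next
          case False
          have "0 \<le> e * (p * (B *v v)$i)" using p0 e(1) mv_nonneg[OF AB(2) vnn] by simp
          moreover have "(A *v w) $ i + e * (A *v v) $ i < p * (B *v w) $ i"
            using e(2) False by force
          ultimately show ?thesis by (simp add: w'_def mv_lin algebra_simps)
        qed
        ultimately show ?thesis using nn by (simp add: P_def)
      qed
      have sub: "{j. w $ j \<noteq> 0} \<subset> {j. w' $ j \<noteq> 0}"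
      proof
        show "{j. w $ j \<noteq> 0} \<subseteq> {j. w' $ j \<noteq> 0}"
          using vJ by (auto simp: w'_def)
        obtain j1 where "v $ j1 \<noteq> 0" using v0 by (metis vec_eq_iff zero_index)
        moreover hence "w $ j1 = 0" using vJ by auto
        ultimately have "j1 \<in> {j. w' $ j \<noteq> 0}" "j1 \<notin> {j. w $ j \<noteq> 0}"
          using e(1) by (auto simp: w'_def)
        thus "{j. w $ j \<noteq> 0} \<noteq> {j. w' $ j \<noteq> 0}" by blast
      qed
      have "f w < f w'" unfolding f_def by (rule psubset_card_mono[OF _ sub]) simp
      thus False using wmax[OF \<open>P w'\<close>] by simp
    qed
    hence req: "cw_rho A B = cw_r A B w" using real by simp
    define c where "c k = inverse (real (Suc k)) / (norm (y k) + 1)" for k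
    have cpos: "c k > 0" for k unfolding c_def by (intro divide_pos_pos) (auto intro: add_nonneg_pos)
    define ys where "ys k = w + c k *\<^sub>R y k" for k
    have ysp: "pos_vec (ys k)" for k
      using wnn y(1)[of k] cpos[of k] by (auto simp: ys_def pos_vec_def nonneg_vec_def add_nonneg_pos)
    have "(\<lambda>k. c k *\<^sub>R y k) \<longlonglongrightarrow> 0"
    proof (rule Lim_null_comparison[OF _ LIMSEQ_inverse_real_of_nat])
      show "\<forall>\<^sub>F k in sequentially. norm (c k *\<^sub>R y k) \<le> inverse (real (Suc k))"
      proof (rule always_eventually, rule allI)
        fix k
        have "norm (y k) / (norm (y k) + 1) \<le> 1"
          by (subst divide_le_eq_1) (auto intro: add_nonneg_pos)
        hence "inverse (real (Suc k)) * (norm (y k) / (norm (y k) + 1)) \<le> inverse (real (Suc k))"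
          by (intro mult_left_le) auto
        moreover have "norm (c k *\<^sub>R y k) = inverse (real (Suc k)) * (norm (y k) / (norm (y k) + 1))"
          using cpos[of k] by (simp add: c_def abs_of_pos)
        ultimately show "norm (c k *\<^sub>R y k) \<le> inverse (real (Suc k))" by simp
      qed
    qed
    hence ysl: "ys \<longlonglongrightarrow> w" unfolding ys_def using tendsto_add[OF tendsto_const[of w]] by fastforce
    have up: "cw_r A B (ys k) \<le> ereal (t k)" for k
    proof -
      have "(A *v ys k)$i \<le> t k * (B *v ys k)$i" for i
      proof -
        have "(A *v w)$i \<le> t k * (B *v w)$i"
          using wC[of i] mult_right_mono[OF pt mv_nonneg[OF AB(2) wnn]] by (rule order_trans)
        moreover have "c k * (A *v y k)$i \<le> c k * (t k * (B *v y k)$i)"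
          using ineq cpos[of k] by (simp add: mult_left_mono)
        ultimately show ?thesis by (simp add: ys_def mv_lin algebra_simps)
      qed
      thus ?thesis using r_le[OF AB pn[OF ysp] t0] by auto
    qed
    have "(\<lambda>k. cw_r A B (ys k)) \<longlonglongrightarrow> ereal p"
    proof (rule tendsto_sandwich[of "\<lambda>k. ereal p" _ _ "\<lambda>k. ereal (t k)"])
      show "\<forall>\<^sub>F k in sequentially. ereal p \<le> cw_r A B (ys k)"
        using low[OF ysp] real by simp
      show "\<forall>\<^sub>F k in sequentially. cw_r A B (ys k) \<le> ereal (t k)" using up by simp
      show "(\<lambda>k. ereal (t k)) \<longlonglongrightarrow> ereal p" using tl by simp
    qed simp
    thus ?thesis using req wnn wne ysp ysl real
      by (intro exI[of _ w] conjI exI[of _ ys]) auto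
  qed
qed

theorem lemma2p4:
  fixes A B :: "real ^ 'n::finite ^ 'm::finite"
  assumes "nonneg_mat A" and "nonneg_mat B"
  shows "(\<exists>y. nonneg_vec y \<and> y \<noteq> 0 \<and> cw_rho_hat A B = cw_r A B y)
       \<and> (\<exists>y. nonneg_vec y \<and> y \<noteq> 0 \<and> cw_rho A B = cw_r A B y \<and>
            (\<exists>ys :: nat \<Rightarrow> real ^ 'n. (\<forall>k. pos_vec (ys k)) \<and> ys \<longlonglongrightarrow> y \<and>
                 (\<lambda>k. cw_r A B (ys k)) \<longlonglongrightarrow> cw_rho A B))"
  using part1[OF assms] part2[OF assms] by blast

end
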